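(* There exist maps $A,B:\{0,1\}^n\to(\{a,b\}\cup\{\epsilon\})^{t}$ with $t=O(n)$, say $A(x)=(\alpha_1,\dots,\alpha_t)$ and $B(y)=(\beta_1,\dots,\beta_t)$, such that for every $(x,y)$ in the domain $D_n$ of $PIP_2$, the word $\alpha_1\beta_1\alpha_2\beta_2\cdots\alpha_t\beta_t$ belongs to $L_5$ if and only if $PIP_2(x,y)=1$. Consequently $N^1(L_5)(O(n))\ge N^1(PIP_2)(n)$, i.e. any lower bound $N^1(PIP_2)=\Omega(n)$ would give $N^1(L_5)=\Omega(n)$.
   Context: $L_5$ is the language recognized by the deterministic automaton with states $1,2,3,4,5$, initial state $1$, accepting set $\{5\}$, and transitions $\delta(1,a)=\delta(1,b)=2$, $\delta(2,a)=5$, $\delta(2,b)=3$, $\delta(3,a)=4$, $\delta(3,b)=5$, $\delta(4,a)=3$, $\delta(4,b)=1$, $\delta(5,a)=\delta(5,b)=5$. $\epsilon$ denotes the empty word. $PIP_2$ is the promise function with domain $D_n\subseteq\{0,1\}^n\times\{0,1\}^n$ consisting of all $(x,y)$ with $\sum_{i}x_iy_i$ odd, together with all $(x,y)$ with $\sum_ix_iy_i$ even such that for every $i$: if $x_i=0,y_i=1$ then $\sum_{j<i}x_jy_j$ is even, and if $x_i=1,y_i=0$ then $\sum_{j<i}x_jy_j$ is odd; on $D_n$, $PIP_2(x,y)=1$ iff $\sum_ix_iy_i$ is odd. Alice holds $x$, Bob holds $y$. $N^1$ denotes non-deterministic communication complexity (for a promise function, covering of the 1-inputs by rectangles containing no 0-input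 of the domain); for $L_5$, $N^1(L_5)(n)$ is that of the problem where Alice receives $a_1,a_3,\dots,a_{2n-1}$, Bob receives $a_2,\dots,a_{2n}$, each in $\{a,b,\epsilon\}$, deciding whether $a_1\cdots a_{2n}\in L_5$. *)

theory Defs
  imports Main
begin

datatype letter = La | Lb

definition delta5 :: "nat \<Rightarrow> letter \<Rightarrow> nat" where
  "delta5 q c = (if q = 1 then 2
     else if q = 2 then (if c = La then 5 else 3)
     else if q = 3 then (if c = La then 4 else 5)
     else if q = 4 then (if c = La then 3 else 1)
     else if q = 5 then 5 else q)"

definition L5 :: "letter list set" where
  "L5 = {w. foldl delta5 1 w = 5}"

text \<open>A symbol of the alphabet {a, b, epsilon}; None is the empty word.\<close>
definition sym_word :: "letter option \<Rightarrow> letter list" where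
  "sym_word s = (case s of None \<Rightarrow> [] | Some c \<Rightarrow> [c])"

definition interleave :: "letter option list \<Rightarrow> letter option list \<Rightarrow> letter list" where
  "interleave as bs = concat (map (\<lambda>(\<alpha>, \<beta>). sym_word \<alpha> @ sym_word \<beta>) (zip as bs))"

definition ip_prefix :: "bool list \<Rightarrow> bool list \<Rightarrow> nat \<Rightarrow> nat" where
  "ip_prefix x y i = card {j. j < i \<and> x ! j \<and> y ! j}"

definition PIP2_dom :: "nat \<Rightarrow> (bool list \<times> bool list) set" where
  "PIP2_dom n = {(x, y). length x = n \<and> length y = n \<and>
     (odd (ip_prefix x y n) \<or>
      (even (ip_prefix x y n) \<and>
       (\<forall>i<n. (\<not> x ! i \<and> y ! i \<longrightarrow> even (ip_prefix x y i)) \<and>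
              (x ! i \<and> \<not> y ! i \<longrightarrow> odd (ip_prefix x y i)))))}"

definition PIP2 :: "bool list \<times> bool list \<Rightarrow> bool" where
  "PIP2 p = odd (ip_prefix (fst p) (snd p) (length (fst p)))"

definition N1 :: "'a set \<Rightarrow> 'b set \<Rightarrow> ('a \<times> 'b) set \<Rightarrow> ('a \<times> 'b \<Rightarrow> bool) \<Rightarrow> nat" where
  "N1 X Y D f = (LEAST m. \<exists>R :: nat \<Rightarrow> 'a set \<times> 'b set.
      (\<forall>i<2^m. fst (R i) \<subseteq> X \<and> snd (R i) \<subseteq> Y \<and>
               (\<forall>p\<in>D. p \<in> fst (R i) \<times> snd (R i) \<longrightarrow> f p)) \<and>
      (\<forall>p\<in>D. f p \<longrightarrow> (\<exists>i<2^m. p \<in> fst (R i) \<times> snd (R i))))"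

definition N1_PIP2 :: "nat \<Rightarrow> nat" where
  "N1_PIP2 n = N1 {x. length x = n} {y. length y = n} (PIP2_dom n) PIP2"

definition N1_L5 :: "nat \<Rightarrow> nat" where
  "N1_L5 n = N1 {as. length as = n} {bs. length bs = n}
     ({as. length as = n} \<times> {bs. length bs = n})
     (\<lambda>(as, bs). interleave as bs \<in> L5)"

end

theory Submission
  imports Defs
begin

lemma letter_UNIV: "(UNIV :: letter set) = {La, Lb}"
  using letter.exhaust by auto

lemma fin_lists: "finite {as :: letter option list. length as = t}"
proof -
  have "finite (UNIV :: letter option set)"
    by (simp add: letter_UNIV)
  hence "finite {xs :: letter option list. set xs \<subseteq> UNIV \<and> length xs = t}"
    by (rule finite_lists_length_eq)
  thus ?thesis by simp
qed

lemma cover_exists: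
  assumes "finite X" "finite Y"
  shows "\<exists>m R :: nat \<Rightarrow> 'a set \<times> 'b set.
      (\<forall>i::nat<2^m. fst (R i) \<subseteq> X \<and> snd (R i) \<subseteq> Y \<and>
               (\<forall>p\<in>X \<times> Y. p \<in> fst (R i) \<times> snd (R i) \<longrightarrow> g p)) \<and>
      (\<forall>p\<in>X \<times> Y. g p \<longrightarrow> (\<exists>i::nat<2^m. p \<in> fst (R i) \<times> snd (R i)))"
proof -
  define P where "P = {p \<in> X \<times> Y. g p}"
  have "finite P" using assms unfolding P_def by simp
  then obtain h where h: "bij_betw h {0..<card P} P" using ex_bij_betw_nat_finite by blast
  define R where "R (i::nat) = (if i < card P then ({fst (h i)}, {snd (h i)}) else ({}, {}))" for i
  have hP: "i < card P \<Longrightarrow> h i \<in> P" for i using h by (auto simp: bij_betw_def)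
  have c1: "\<forall>i::nat<2^card P. fst (R i) \<subseteq> X \<and> snd (R i) \<subseteq> Y \<and>
               (\<forall>p\<in>X \<times> Y. p \<in> fst (R i) \<times> snd (R i) \<longrightarrow> g p)"
  proof (intro allI impI conjI ballI)
    fix i :: nat
    show "fst (R i) \<subseteq> X" using hP unfolding R_def P_def by (auto simp: mem_Times_iff)
    show "snd (R i) \<subseteq> Y" using hP unfolding R_def P_def by (auto simp: mem_Times_iff)
    fix p assume "p \<in> X \<times> Y" "p \<in> fst (R i) \<times> snd (R i)"
    thus "g p"
    proof (cases "i < card P")
      case True
      with \<open>p \<in> fst (R i) \<times> snd (R i)\<close> have "p = h i" by (auto simp: R_def prod_eq_iff)
      thus ?thesis using hP[OF True] unfolding P_def by auto
    next
      case False
      with \<open>p \<in> fst (R i) \<times> snd (R i)\<close> show ?thesis by (auto simp: R_def)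
    qed
  qed
  have c2: "\<forall>p\<in>X \<times> Y. g p \<longrightarrow> (\<exists>i::nat<2^card P. p \<in> fst (R i) \<times> snd (R i))"
  proof (intro ballI impI)
    fix p assume "p \<in> X \<times> Y" "g p"
    hence "p \<in> P" unfolding P_def by auto
    then obtain i where i: "i < card P" "h i = p" using h
      by (metis atLeastLessThan_iff bij_betw_iff_bijections)
    have "card P < (2::nat) ^ card P" by (rule less_exp)
    hence i2: "i < (2::nat) ^ card P" using i by linarith
    have "p \<in> fst (R i) \<times> snd (R i)" using i by (auto simp: R_def mem_Times_iff)
    thus "\<exists>i::nat<2 ^ card P. p \<in> fst (R i) \<times> snd (R i)" using i2 by blast
  qed
  show ?thesis using c1 c2 by blast
qed

lemma N1_reduce:
  assumes fin: "finite X'" "finite Y'"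
    and AX: "\<forall>x\<in>X. A x \<in> X'" and BY: "\<forall>y\<in>Y. B y \<in> Y'"
    and DXY: "D \<subseteq> X \<times> Y"
    and fg: "\<forall>p\<in>D. f p = g (A (fst p), B (snd p))"
  shows "N1 X Y D f \<le> N1 X' Y' (X' \<times> Y') g"
proof -
  let ?C = "\<lambda>m. \<exists>R :: nat \<Rightarrow> _ set \<times> _ set.
      (\<forall>i::nat<2^m. fst (R i) \<subseteq> X' \<and> snd (R i) \<subseteq> Y' \<and>
               (\<forall>p\<in>X' \<times> Y'. p \<in> fst (R i) \<times> snd (R i) \<longrightarrow> g p)) \<and>
      (\<forall>p\<in>X' \<times> Y'. g p \<longrightarrow> (\<exists>i::nat<2^m. p \<in> fst (R i) \<times> snd (R i)))"
  have "\<exists>m. ?C m" using cover_exists[OF fin] by blast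
  hence "?C (LEAST m. ?C m)" by (rule LeastI_ex)
  hence "?C (N1 X' Y' (X' \<times> Y') g)" unfolding N1_def .
  then obtain R where R1: "\<forall>i::nat<2^(N1 X' Y' (X' \<times> Y') g). fst (R i) \<subseteq> X' \<and> snd (R i) \<subseteq> Y' \<and>
               (\<forall>p\<in>X' \<times> Y'. p \<in> fst (R i) \<times> snd (R i) \<longrightarrow> g p)"
    and R2: "\<forall>p\<in>X' \<times> Y'. g p \<longrightarrow> (\<exists>i::nat<2^(N1 X' Y' (X' \<times> Y') g). p \<in> fst (R i) \<times> snd (R i))"
    by blast
  define R' where "R' (i::nat) = ({x\<in>X. A x \<in> fst (R i)}, {y\<in>Y. B y \<in> snd (R i)})" for i
  let ?m = "N1 X' Y' (X' \<times> Y') g"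
  have "\<exists>R :: nat \<Rightarrow> _ set \<times> _ set.
      (\<forall>i::nat<2^?m. fst (R i) \<subseteq> X \<and> snd (R i) \<subseteq> Y \<and>
               (\<forall>p\<in>D. p \<in> fst (R i) \<times> snd (R i) \<longrightarrow> f p)) \<and>
      (\<forall>p\<in>D. f p \<longrightarrow> (\<exists>i::nat<2^?m. p \<in> fst (R i) \<times> snd (R i)))"
  proof (intro exI[of _ R'] conjI allI impI ballI)
    fix i :: nat assume i: "i < 2 ^ ?m"
    show "fst (R' i) \<subseteq> X" "snd (R' i) \<subseteq> Y" by (auto simp: R'_def)
    fix p assume p: "p \<in> D" "p \<in> fst (R' i) \<times> snd (R' i)"
    obtain x y where pxy: "p = (x, y)" by fastforce
    have "(A x, B y) \<in> X' \<times> Y'" using p pxy DXY AX BY by auto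
    moreover have "(A x, B y) \<in> fst (R i) \<times> snd (R i)" using p pxy by (auto simp: R'_def)
    ultimately have "g (A x, B y)" using R1 i by blast
    thus "f p" using fg p pxy by auto
  next
    fix p assume p: "p \<in> D" "f p"
    obtain x y where pxy: "p = (x, y)" by fastforce
    have xy: "x \<in> X" "y \<in> Y" using p pxy DXY by auto
    have "(A x, B y) \<in> X' \<times> Y'" using xy AX BY by auto
    moreover have "g (A x, B y)" using fg p pxy by auto
    ultimately obtain i where "i < 2 ^ ?m" "(A x, B y) \<in> fst (R i) \<times> snd (R i)" using R2 by blast
    thus "\<exists>i<2 ^ ?m. p \<in> fst (R' i) \<times> snd (R' i)"
      using xy pxy by (intro exI[of _ i]) (auto simp: R'_def)
  qed
  thus ?thesis unfolding N1_def[of X Y D f] by (rule Least_le)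
qed


definition ga :: "bool \<Rightarrow> letter option list" where
  "ga b = (if b then [Some La, Some La, Some La] else [None, None, Some La])"
definition gb :: "bool \<Rightarrow> letter option list" where
  "gb b = (if b then [Some Lb, Some Lb, Some Lb] else [Some La, Some Lb, Some Lb])"
definition gw :: "bool \<Rightarrow> bool \<Rightarrow> letter list" where
  "gw a b = interleave (ga a) (gb b)"

definition Amap :: "bool list \<Rightarrow> letter option list" where
  "Amap x = concat (map ga x) @ [Some Lb]"
definition Bmap :: "bool list \<Rightarrow> letter option list" where
  "Bmap y = concat (map gb y) @ [None]"

lemma interleave_append:
  "length as1 = length bs1 \<Longrightarrow> interleave (as1 @ as2) (bs1 @ bs2) = interleave as1 bs1 @ interleave as2 bs2"
  by (simp add: interleave_def)

lemma len_ga[simp]: "length (ga b) = 3" by (simp add: ga_def)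
lemma len_gb[simp]: "length (gb b) = 3" by (simp add: gb_def)

lemma len_concat_ga: "length (concat (map ga x)) = 3 * length x"
  by (induction x) auto
lemma len_concat_gb: "length (concat (map gb x)) = 3 * length x"
  by (induction x) auto

lemma interleave_concat:
  "length x = length y \<Longrightarrow> interleave (concat (map ga x)) (concat (map gb y)) = concat (map2 gw x y)"
proof (induction x arbitrary: y)
  case Nil thus ?case by (simp add: interleave_def)
next
  case (Cons a x)
  then obtain b y' where y: "y = b # y'" "length x = length y'" by (cases y) auto
  show ?case using Cons.IH[OF y(2)] y by (simp add: interleave_append gw_def)
qed

lemma interleave_AB:
  "length x = length y \<Longrightarrow> interleave (Amap x) (Bmap y) = concat (map2 gw x y) @ [Lb]"
  unfolding Amap_def Bmap_def
  by (simp add: interleave_append len_concat_ga len_concat_gb interleave_concat)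
     (simp add: interleave_def sym_word_def)

lemma gw_vals:
  "gw False False = [La, Lb, La, Lb]"
  "gw True False = [La, La, La, Lb, La, Lb]"
  "gw False True = [Lb, Lb, La, Lb]"
  "gw True True = [La, Lb, La, Lb, La, Lb]"
  by (simp_all add: gw_def ga_def gb_def interleave_def sym_word_def)

lemma ip_prefix_Suc:
  "ip_prefix x y (Suc i) = ip_prefix x y i + (if x ! i \<and> y ! i then 1 else 0)"
proof -
  have "{j. j < Suc i \<and> x ! j \<and> y ! j} = {j. j < i \<and> x ! j \<and> y ! j} \<union> (if x ! i \<and> y ! i then {i} else {})"
    by (auto simp: less_Suc_eq)
  thus ?thesis unfolding ip_prefix_def by (auto simp: card_insert_if)
qed

definition st :: "bool list \<Rightarrow> bool list \<Rightarrow> nat \<Rightarrow> nat" where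
  "st x y k = (if odd (ip_prefix x y k) then 3 else 1)"

definition okc :: "bool list \<Rightarrow> bool list \<Rightarrow> nat \<Rightarrow> bool" where
  "okc x y i = ((\<not> x ! i \<and> y ! i \<longrightarrow> even (ip_prefix x y i)) \<and>
              (x ! i \<and> \<not> y ! i \<longrightarrow> odd (ip_prefix x y i)))"

lemma fold5: "foldl delta5 5 w = 5"
  by (induction w) (auto simp: delta5_def)

lemma sim:
  assumes "length x = n" "length y = n"
  shows "k \<le> n \<Longrightarrow> (foldl delta5 1 (concat (map2 gw (take k x) (take k y))) = 5 \<or>
           foldl delta5 1 (concat (map2 gw (take k x) (take k y))) = st x y k) \<and>
         ((\<forall>i<k. okc x y i) \<longrightarrow> foldl delta5 1 (concat (map2 gw (take k x) (take k y))) = st x y k)"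
proof (induction k)
  case 0 thus ?case by (simp add: st_def ip_prefix_def)
next
  case (Suc k)
  hence k: "k < n" by simp
  let ?q = "foldl delta5 1 (concat (map2 gw (take k x) (take k y)))"
  have eq: "foldl delta5 1 (concat (map2 gw (take (Suc k) x) (take (Suc k) y)))
      = foldl delta5 ?q (gw (x ! k) (y ! k))"
    using k assms by (simp add: take_Suc_conv_app_nth)
  have IH: "(?q = 5 \<or> ?q = st x y k) \<and> ((\<forall>i<k. okc x y i) \<longrightarrow> ?q = st x y k)"
    using Suc k by simp
  show ?case
  proof (cases "?q = 5")
    case True
    hence "foldl delta5 ?q (gw (x ! k) (y ! k)) = 5" by (simp add: fold5)
    moreover have "\<not> (\<forall>i<k. okc x y i)" using IH True by (auto simp: st_def split: if_splits)
    ultimately show ?thesis unfolding eq by auto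
  next
    case False
    hence q: "?q = st x y k" using IH by auto
    show ?thesis unfolding eq q
      by (cases "x ! k"; cases "y ! k"; cases "odd (ip_prefix x y k)")
         (auto simp: st_def ip_prefix_Suc gw_vals delta5_def okc_def less_Suc_eq)
  qed
qed

theorem mainTheorem17:
  shows "\<exists>c::nat. \<forall>n. \<exists>t \<le> c * n + c.
     (\<exists>A B :: bool list \<Rightarrow> letter option list.
        (\<forall>x. length x = n \<longrightarrow> length (A x) = t) \<and>
        (\<forall>y. length y = n \<longrightarrow> length (B y) = t) \<and>
        (\<forall>(x, y) \<in> PIP2_dom n. (interleave (A x) (B y) \<in> L5) = PIP2 (x, y)))
     \<and> N1_L5 t \<ge> N1_PIP2 n"
proof (rule exI[of _ 3], rule allI)
  fix n
  have corr: "(interleave (Amap x) (Bmap y) \<in> L5) = PIP2 (x, y)" if "(x, y) \<in> PIP2_dom n" for x y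
  proof -
    have len: "length x = n" "length y = n" using that by (auto simp: PIP2_dom_def)
    let ?q = "foldl delta5 1 (concat (map2 gw x y))"
    have S: "(?q = 5 \<or> ?q = st x y n) \<and> ((\<forall>i<n. okc x y i) \<longrightarrow> ?q = st x y n)"
      using sim[OF len, of n] len by simp
    have L: "(interleave (Amap x) (Bmap y) \<in> L5) = (delta5 ?q Lb = 5)"
      using len by (simp add: interleave_AB L5_def)
    show ?thesis
    proof (cases "odd (ip_prefix x y n)")
      case True
      hence "?q = 5 \<or> ?q = 3" using S by (auto simp: st_def)
      thus ?thesis using L True len by (auto simp: PIP2_def delta5_def)
    next
      case False
      hence "\<forall>i<n. okc x y i" using that by (auto simp: PIP2_dom_def okc_def)
      hence "?q = 1" using S False by (auto simp: st_def)
      thus ?thesis using L False len by (auto simp: PIP2_def delta5_def)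
    qed
  qed
  have red: "N1_PIP2 n \<le> N1_L5 (3 * n + 1)"
    unfolding N1_PIP2_def N1_L5_def
  proof (rule N1_reduce[where A = Amap and B = Bmap])
    show "finite {as :: letter option list. length as = 3 * n + 1}" by (rule fin_lists)
    show "finite {as :: letter option list. length as = 3 * n + 1}" by (rule fin_lists)
    show "\<forall>x\<in>{x. length x = n}. Amap x \<in> {as. length as = 3 * n + 1}"
      by (simp add: Amap_def len_concat_ga)
    show "\<forall>y\<in>{y. length y = n}. Bmap y \<in> {as. length as = 3 * n + 1}"
      by (simp add: Bmap_def len_concat_gb)
    show "PIP2_dom n \<subseteq> {x. length x = n} \<times> {y. length y = n}"
      by (auto simp: PIP2_dom_def)
    show "\<forall>p\<in>PIP2_dom n. PIP2 p = (case (Amap (fst p), Bmap (snd p)) of (as, bs) \<Rightarrow> interleave as bs \<in> L5)"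
      using corr by auto
  qed
  show "\<exists>t \<le> 3 * n + 3.
     (\<exists>A B :: bool list \<Rightarrow> letter option list.
        (\<forall>x. length x = n \<longrightarrow> length (A x) = t) \<and>
        (\<forall>y. length y = n \<longrightarrow> length (B y) = t) \<and>
        (\<forall>(x, y) \<in> PIP2_dom n. (interleave (A x) (B y) \<in> L5) = PIP2 (x, y)))
     \<and> N1_L5 t \<ge> N1_PIP2 n"
    apply (rule exI[of _ "3 * n + 1"])
    apply (intro conjI)
      apply simp
     apply (rule exI[of _ Amap], rule exI[of _ Bmap])
     using corr apply (auto simp: Amap_def Bmap_def len_concat_ga len_concat_gb)[1]
    using red by simp
qed

end
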